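(* Let $I\subseteq\mathbb{R}$ be an interval and let $f:I\to\mathbb{R}$ be absolutely continuous on $I^{\circ}$, the interior of $I$. Let $a,b\in I^{\circ}$ with $a<b$, and suppose $f'\in L[a,b]$. Put $M=\max_{a\le x\le b} f(x)$ and $$\mathcal{T}_{\mathrm{rap}}(f):=(b-a)\,\frac{f(a)+f(b)}{2}-\int_a^b f(x)\,dx .$$ Then $$\Bigl[\frac{2}{b-a}\,\mathcal{T}_{\mathrm{rap}}(f)-M\Bigr]\,M\le \frac{b-a}{12}\int_a^b f'(x)^2\,dx ,$$ and this inequality is sharp (equality is attained for some admissible $f$, e.g. on $[a,b]=[0,1]$).
   Context: $L[a,b]$ denotes the space of Lebesgue integrable functions on $[a,b]$. *)

theory Defs
  imports "HOL-Analysis.Analysis"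
begin

definition abs_continuous_on :: "real set \<Rightarrow> (real \<Rightarrow> real) \<Rightarrow> bool" where
  "abs_continuous_on S f \<longleftrightarrow>
     (\<forall>e>0. \<exists>d>0. \<forall>(n::nat) (u::nat \<Rightarrow> real) (v::nat \<Rightarrow> real).
        (\<forall>k<n. u k < v k \<and> {u k..v k} \<subseteq> S) \<and>
        (\<forall>k<n. \<forall>j<n. k \<noteq> j \<longrightarrow> {u k<..<v k} \<inter> {u j<..<v j} = {}) \<and>
        (\<Sum>k<n. v k - u k) < d
        \<longrightarrow> (\<Sum>k<n. \<bar>f (v k) - f (u k)\<bar>) < e)"

definition Trap :: "real \<Rightarrow> real \<Rightarrow> (real \<Rightarrow> real) \<Rightarrow> real" where
  "Trap a b f = (b - a) * (f a + f b) / 2 - (LBINT x:{a..b}. f x)"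

end

theory Submission
  imports Defs
begin


lemma ac_subset:
  assumes A: "abs_continuous_on S f" and TS: "T \<subseteq> S" shows "abs_continuous_on T f"
  unfolding abs_continuous_on_def
proof (intro allI impI)
  fix e :: real assume "e > 0"
  then obtain d where d: "d > 0" and H: "\<forall>(n::nat) u v.
        (\<forall>k<n. u k < v k \<and> {u k..v k} \<subseteq> S) \<and>
        (\<forall>k<n. \<forall>j<n. k \<noteq> j \<longrightarrow> {u k<..<v k} \<inter> {u j<..<v j} = {}) \<and>
        (\<Sum>k<n. v k - u k) < d
        \<longrightarrow> (\<Sum>k<n. \<bar>f (v k) - f (u k)\<bar>) < e"
    using A unfolding abs_continuous_on_def by blast
  show "\<exists>d>0. \<forall>(n::nat) u v.
        (\<forall>k<n. u k < v k \<and> {u k..v k} \<subseteq> T) \<and>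
        (\<forall>k<n. \<forall>j<n. k \<noteq> j \<longrightarrow> {u k<..<v k} \<inter> {u j<..<v j} = {}) \<and>
        (\<Sum>k<n. v k - u k) < d
        \<longrightarrow> (\<Sum>k<n. \<bar>f (v k) - f (u k)\<bar>) < e"
  proof (intro exI[of _ d] conjI allI impI d)
    fix n :: nat and u v :: "nat \<Rightarrow> real"
    assume a: "(\<forall>k<n. u k < v k \<and> {u k..v k} \<subseteq> T) \<and>
        (\<forall>k<n. \<forall>j<n. k \<noteq> j \<longrightarrow> {u k<..<v k} \<inter> {u j<..<v j} = {}) \<and>
        (\<Sum>k<n. v k - u k) < d"
    then have "(\<forall>k<n. u k < v k \<and> {u k..v k} \<subseteq> S)" using TS by blast
    with a H show "(\<Sum>k<n. \<bar>f (v k) - f (u k)\<bar>) < e" by blast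
  qed
qed

lemma ac_finite_set:
  assumes "abs_continuous_on S f" "e > 0"
  obtains d where "d > 0"
    "\<And>\<K>. finite \<K> \<Longrightarrow> (\<And>K. K \<in> \<K> \<Longrightarrow> \<exists>u v. K = {u..v} \<and> u < v \<and> K \<subseteq> S) \<Longrightarrow>
       (\<And>K L. K \<in> \<K> \<Longrightarrow> L \<in> \<K> \<Longrightarrow> K \<noteq> L \<Longrightarrow> interior K \<inter> interior L = {}) \<Longrightarrow>
       (\<Sum>K\<in>\<K>. Sup K - Inf K) < d \<Longrightarrow> (\<Sum>K\<in>\<K>. \<bar>f (Sup K) - f (Inf K)\<bar>) < e"
proof -
  obtain d where d: "d > 0" and D0: "\<forall>(n::nat) u v.
        (\<forall>k<n. u k < v k \<and> {u k..v k} \<subseteq> S) \<and>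
        (\<forall>k<n. \<forall>j<n. k \<noteq> j \<longrightarrow> {u k<..<v k} \<inter> {u j<..<v j} = {}) \<and>
        (\<Sum>k<n. v k - u k) < d
        \<longrightarrow> (\<Sum>k<n. \<bar>f (v k) - f (u k)\<bar>) < e"
    using assms unfolding abs_continuous_on_def by blast
  note D = D0[rule_format]
  show ?thesis
  proof (rule that[OF d])
    fix \<K> :: "real set set"
    assume fin: "finite \<K>" and K: "\<And>K. K \<in> \<K> \<Longrightarrow> \<exists>u v. K = {u..v} \<and> u < v \<and> K \<subseteq> S"
      and dis: "\<And>K L. K \<in> \<K> \<Longrightarrow> L \<in> \<K> \<Longrightarrow> K \<noteq> L \<Longrightarrow> interior K \<inter> interior L = {}"
      and sm: "(\<Sum>K\<in>\<K>. Sup K - Inf K) < d"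
    obtain h where h: "bij_betw h {..<card \<K>} \<K>"
      using ex_bij_betw_nat_finite[OF fin] by (metis atLeast0LessThan)
    define u where "u k = Inf (h k)" for k
    define v where "v k = Sup (h k)" for k
    have hk: "h k = {u k..v k} \<and> u k < v k \<and> h k \<subseteq> S" if "k < card \<K>" for k
    proof -
      have "h k \<in> \<K>" using h that by (auto simp: bij_betw_def)
      then obtain x y where "h k = {x..y}" "x < y" "h k \<subseteq> S" using K by metis
      then show ?thesis by (simp add: u_def v_def)
    qed
    have "(\<Sum>k<card \<K>. \<bar>f (v k) - f (u k)\<bar>) < e"
    proof (rule D, intro conjI allI impI)
      fix k assume "k < card \<K>" then show "u k < v k" "{u k..v k} \<subseteq> S" using hk by auto
    next
      fix k j assume kj: "k < card \<K>" "j < card \<K>" "k \<noteq> j"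
      then have "h k \<noteq> h j" "h k \<in> \<K>" "h j \<in> \<K>" using h by (auto simp: bij_betw_def inj_on_def)
      then have "interior (h k) \<inter> interior (h j) = {}" using dis by blast
      moreover have "interior (h k) = {u k<..<v k}" "interior (h j) = {u j<..<v j}"
        using hk[OF kj(1)] hk[OF kj(2)] by simp_all
      ultimately show "{u k<..<v k} \<inter> {u j<..<v j} = {}" by simp
    next
      have "(\<Sum>k<card \<K>. v k - u k) = (\<Sum>K\<in>\<K>. Sup K - Inf K)"
        unfolding u_def v_def by (rule sum.reindex_bij_betw[OF h])
      then show "(\<Sum>k<card \<K>. v k - u k) < d" using sm by simp
    qed
    moreover have "(\<Sum>k<card \<K>. \<bar>f (v k) - f (u k)\<bar>) = (\<Sum>K\<in>\<K>. \<bar>f (Sup K) - f (Inf K)\<bar>)"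
      unfolding u_def v_def by (rule sum.reindex_bij_betw[OF h])
    ultimately show "(\<Sum>K\<in>\<K>. \<bar>f (Sup K) - f (Inf K)\<bar>) < e" by simp
  qed
qed



lemma tagged_K:
  assumes p: "p tagged_division_of {a..b}" and xK: "(x,K) \<in> p"
  obtains u v where "K = {u..v}" "u \<le> x" "x \<le> v" "K \<subseteq> {a..b}" "Sup K = v" "Inf K = u"
    "measure lborel K = v - u"
proof -
  obtain u v where K: "K = {u..v}" using p xK by (metis tagged_division_ofD(4) box_real(2))
  have xinK: "x \<in> K" and Kab: "K \<subseteq> {a..b}" using p xK by blast+
  then have uv: "u \<le> x" "x \<le> v" using K by auto
  then have SI: "Sup K = v" "Inf K = u" "measure lborel K = v - u" using K by auto
  show ?thesis using that K uv Kab SI by blast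
qed

lemma Umeas_aux:
  fixes N U S :: "real set"
  assumes N: "N \<in> null_sets lebesgue" and U: "(U - N) \<in> lmeasurable" "emeasure lebesgue (U - N) < ennreal d"
    and S: "S \<in> lmeasurable" "S \<subseteq> U"
  shows "measure lebesgue S < d"
proof -
  have Nl: "N \<in> lmeasurable" using N by (simp add: fmeasurableI_null_sets)
  have UN: "(U - N) \<union> N \<in> lmeasurable" using U(1) Nl by blast
  have "measure lebesgue S \<le> measure lebesgue ((U - N) \<union> N)"
    using S UN by (intro measure_mono_fmeasurable) auto
  also have "\<dots> \<le> measure lebesgue (U - N) + measure lebesgue N"
    by (rule measure_Un_le) (use U(1) Nl in auto)
  also have "measure lebesgue N = 0" using N by (simp add: measure_eq_0_null_sets)
  also have "measure lebesgue (U - N) < d"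
    using U emeasure_eq_measure2[OF U(1)] by (metis ennreal_less_iff measure_nonneg)
  finally show ?thesis by simp
qed

lemma reindex_tagged:
  fixes f :: "real \<Rightarrow> real"
  assumes p: "p tagged_division_of {a..b}" and q: "q \<subseteq> p"
  shows "(\<Sum>(x,K)\<in>q. \<bar>f (Sup K) - f (Inf K)\<bar>) = (\<Sum>K\<in>snd ` q. \<bar>f (Sup K) - f (Inf K)\<bar>)"
proof -
  have fq: "finite q" using p q finite_subset by blast
  have "(\<Sum>K\<in>snd ` q. \<bar>f (Sup K) - f (Inf K)\<bar>) = (\<Sum>xK\<in>q. \<bar>f (Sup (snd xK)) - f (Inf (snd xK))\<bar>)"
  proof (subst sum.reindex_nontrivial[OF fq])
    fix xK yL assume a: "xK \<in> q" "yL \<in> q" "xK \<noteq> yL" "snd xK = snd yL"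
    obtain x K y L where e: "xK = (x,K)" "yL = (y,L)" by fastforce
    have inp: "(x,K) \<in> p" "(y,K) \<in> p" using a e q by auto
    have "(x,K) \<noteq> (y,K)" using a e by auto
    then have "interior K \<inter> interior K = {}" using tagged_division_ofD(5)[OF p inp] by blast
    moreover obtain u v where K: "K = {u..v}" "u \<le> x" "x \<le> v" "Sup K = v" "Inf K = u"
      using tagged_K[OF p inp(1)] by metis
    ultimately have "u = v" by auto
    then show "\<bar>f (Sup (snd xK)) - f (Inf (snd xK))\<bar> = 0" using K e by simp
  qed (simp add: comp_def)
  then show ?thesis by (simp add: split_def)
qed

lemma ftc_ac:
  fixes f g :: "real \<Rightarrow> real"
  assumes ab: "a \<le> b" and ac: "abs_continuous_on {a..b} f" and N: "negligible N"
    and der: "\<And>x. x \<in> {a..b} - N \<Longrightarrow> (f has_real_derivative g x) (at x within {a..b})"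
    and int: "g integrable_on {a..b}"
  shows "(g has_integral (f b - f a)) {a..b}"
proof -
  define g0 where "g0 x = (if x \<in> N then 0 else g x)" for x
  have g0int: "(g0 has_integral integral {a..b} g) {a..b}"
    by (rule has_integral_spike[OF N _ integrable_integral[OF int]]) (auto simp: g0_def)
  have key: "\<bar>f b - f a - integral {a..b} g\<bar> < e" if e: "e > 0" for e
  proof (cases "a = b")
    case True then show ?thesis using e by simp
  next
    case False
    then have "a < b" using ab by simp
    define \<epsilon> where "\<epsilon> = e / (3 * (b - a))"
    have "\<epsilon> > 0" using e \<open>a < b\<close> by (simp add: \<epsilon>_def)
    have "e/3 > 0" using e by simp
    have "\<exists>\<gamma>. gauge \<gamma> \<and> (\<forall>\<D>. \<D> tagged_division_of {a..b} \<and> \<gamma> fine \<D> \<longrightarrow>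
        norm (sum (\<lambda>(x,k). measure lborel k *\<^sub>R g0 x) \<D> - integral {a..b} g) < e/3)"
      using g0int[unfolded has_integral_real, rule_format, OF \<open>e/3 > 0\<close>] .
    then obtain \<gamma>1 where g1g: "gauge \<gamma>1 \<and> (\<forall>\<D>. \<D> tagged_division_of {a..b} \<and> \<gamma>1 fine \<D> \<longrightarrow>
        norm (sum (\<lambda>(x,k). measure lborel k *\<^sub>R g0 x) \<D> - integral {a..b} g) < e/3)" by (rule exE)
    then have g1: "gauge \<gamma>1" and g1f: "\<forall>\<D>. \<D> tagged_division_of {a..b} \<and> \<gamma>1 fine \<D> \<longrightarrow>
        norm (sum (\<lambda>(x,k). measure lborel k *\<^sub>R g0 x) \<D> - integral {a..b} g) < e/3" by simp_all
    have "\<exists>d>0. \<forall>\<K>. finite \<K> \<longrightarrow> (\<forall>K\<in>\<K>. \<exists>u v. K = {u..v} \<and> u < v \<and> K \<subseteq> {a..b}) \<longrightarrow>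
       (\<forall>K\<in>\<K>. \<forall>L\<in>\<K>. K \<noteq> L \<longrightarrow> interior K \<inter> interior L = {}) \<longrightarrow>
       (\<Sum>K\<in>\<K>. Sup K - Inf K) < d \<longrightarrow> (\<Sum>K\<in>\<K>. \<bar>f (Sup K) - f (Inf K)\<bar>) < e/3"
    proof (rule ac_finite_set[OF ac \<open>e/3 > 0\<close>])
      fix d :: real
      assume d: "d > 0" and H: "\<And>\<K>. finite \<K> \<Longrightarrow> (\<And>K. K \<in> \<K> \<Longrightarrow> \<exists>u v. K = {u..v} \<and> u < v \<and> K \<subseteq> {a..b}) \<Longrightarrow>
       (\<And>K L. K \<in> \<K> \<Longrightarrow> L \<in> \<K> \<Longrightarrow> K \<noteq> L \<Longrightarrow> interior K \<inter> interior L = {}) \<Longrightarrow>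
       (\<Sum>K\<in>\<K>. Sup K - Inf K) < d \<Longrightarrow> (\<Sum>K\<in>\<K>. \<bar>f (Sup K) - f (Inf K)\<bar>) < e/3"
      show ?thesis
        by (rule exI[of _ d]) (use d H in auto)
    qed
    then obtain d where d: "d > 0" and dK: "\<forall>\<K>. finite \<K> \<longrightarrow> (\<forall>K\<in>\<K>. \<exists>u v. K = {u..v} \<and> u < v \<and> K \<subseteq> {a..b}) \<longrightarrow>
       (\<forall>K\<in>\<K>. \<forall>L\<in>\<K>. K \<noteq> L \<longrightarrow> interior K \<inter> interior L = {}) \<longrightarrow>
       (\<Sum>K\<in>\<K>. Sup K - Inf K) < d \<longrightarrow> (\<Sum>K\<in>\<K>. \<bar>f (Sup K) - f (Inf K)\<bar>) < e/3"
      by auto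
    have Nnull: "N \<in> null_sets lebesgue" using N negligible_iff_null_sets by blast
    then have "N \<in> sets lebesgue" by auto
    obtain U where U: "open U" "N \<subseteq> U" "(U - N) \<in> lmeasurable" "emeasure lebesgue (U - N) < ennreal d"
      using sets_lebesgue_outer_open[OF \<open>N \<in> sets lebesgue\<close> d] by blast
    have Umeas: "measure lebesgue S < d" if S: "S \<in> lmeasurable" "S \<subseteq> U" for S
      by (rule Umeas_aux[OF Nnull U(3,4) S])
    have "\<forall>x. \<exists>\<delta>>0. x \<in> {a..b} - N \<longrightarrow>
         (\<forall>y\<in>{a..b}. norm (y - x) < \<delta> \<longrightarrow> norm (f y - f x - g x * (y - x)) \<le> \<epsilon> * norm (y - x))"
    proof
      fix x show "\<exists>\<delta>>0. x \<in> {a..b} - N \<longrightarrow>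
         (\<forall>y\<in>{a..b}. norm (y - x) < \<delta> \<longrightarrow> norm (f y - f x - g x * (y - x)) \<le> \<epsilon> * norm (y - x))"
      proof (cases "x \<in> {a..b} - N")
        case True
        have "\<exists>\<delta>>0. \<forall>y\<in>{a..b}. norm (y - x) < \<delta> \<longrightarrow> norm (f y - f x - g x * (y - x)) \<le> \<epsilon> * norm (y - x)"
          using der[OF True] \<open>\<epsilon> > 0\<close> unfolding has_field_derivative_def has_derivative_within_alt by blast
        then show ?thesis by blast
      next
        case False then show ?thesis by (intro exI[of _ 1]) auto
      qed
    qed
    then obtain \<delta> where \<delta>0: "\<forall>x. \<delta> x > 0 \<and> (x \<in> {a..b} - N \<longrightarrow>
         (\<forall>y\<in>{a..b}. norm (y - x) < \<delta> x \<longrightarrow> norm (f y - f x - g x * (y - x)) \<le> \<epsilon> * norm (y - x)))"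
      unfolding choice_iff by blast
    have \<delta>: "\<And>x. \<delta> x > 0" using \<delta>0 by blast
    have \<delta>f: "\<And>x y. x \<in> {a..b} - N \<Longrightarrow> y \<in> {a..b} \<Longrightarrow> \<bar>y - x\<bar> < \<delta> x \<Longrightarrow>
        \<bar>f y - f x - g x * (y - x)\<bar> \<le> \<epsilon> * \<bar>y - x\<bar>"
      using \<delta>0 unfolding real_norm_def by blast
    have "\<forall>x. \<exists>r>0. x \<in> N \<longrightarrow> ball x r \<subseteq> U"
      using U(1,2) open_contains_ball by blast
    then obtain r where r0: "\<forall>x. r x > 0 \<and> (x \<in> N \<longrightarrow> ball x (r x) \<subseteq> U)"
      unfolding choice_iff by blast
    have r: "\<And>x. r x > 0" and rU: "\<And>x. x \<in> N \<Longrightarrow> ball x (r x) \<subseteq> U"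
      using r0 by blast+
    define \<gamma> where "\<gamma> = (\<lambda>x. ball x (if x \<in> N then r x else \<delta> x) \<inter> \<gamma>1 x)"
    have "gauge \<gamma>"
      unfolding \<gamma>_def using g1 r \<delta> by (intro gauge_Int gauge_ball_dependent) auto
    then obtain p where p: "p tagged_division_of {a..b}" and pf: "\<gamma> fine p"
      using fine_division_exists_real by blast
    have pf1: "\<gamma>1 fine p" and pf2: "(\<lambda>x. ball x (if x \<in> N then r x else \<delta> x)) fine p"
      using pf unfolding \<gamma>_def fine_Int by auto
    have finp: "finite p" using p by blast
    have fba: "f b - f a = (\<Sum>(x,K)\<in>p. f (Sup K) - f (Inf K))"
      using additive_tagged_division_1[OF ab p, of f] by simp
    have cont: "(\<Sum>(x,K)\<in>p. measure lborel K) = b - a"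
      using additive_content_tagged_division[of p a b] p ab by simp
    have pw: "\<bar>f (Sup K) - f (Inf K) - measure lborel K * g0 x\<bar> \<le> \<epsilon> * measure lborel K + (if x \<in> N then \<bar>f (Sup K) - f (Inf K)\<bar> else 0)"
      if xK: "(x,K) \<in> p" for x K
    proof -
      obtain u v where K: "K = {u..v}" using p xK by (metis tagged_division_ofD(4) box_real(2))
      have xinK: "x \<in> K" and Kab: "K \<subseteq> {a..b}" using p xK by blast+
      then have uv: "u \<le> x" "x \<le> v" using K by auto
      then have SI: "Sup K = v" "Inf K = u" "measure lborel K = v - u" using K by auto
      have Kball: "K \<subseteq> ball x (if x \<in> N then r x else \<delta> x)" using fineD[OF pf2 xK] by simp
      show ?thesis
      proof (cases "x \<in> N")
        case True
        then show ?thesis using SI uv \<open>\<epsilon> > 0\<close> by (simp add: g0_def)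
      next
        case False
        have xE: "x \<in> {a..b} - N" using False xinK Kab by blast
        have uab: "u \<in> {a..b}" "v \<in> {a..b}" using Kab K uv by auto
        have uK: "u \<in> K" "v \<in> K" using K uv by auto
        have Kb: "K \<subseteq> ball x (\<delta> x)" using Kball False by simp
        have "u \<in> ball x (\<delta> x)" "v \<in> ball x (\<delta> x)" using uK Kb by blast+
        then have du: "\<bar>u - x\<bar> < \<delta> x" and dv: "\<bar>v - x\<bar> < \<delta> x" by (auto simp: dist_real_def)
        have 1: "\<bar>f u - f x - g x * (u - x)\<bar> \<le> \<epsilon> * \<bar>u - x\<bar>" by (rule \<delta>f[OF xE uab(1) du])
        have 2: "\<bar>f v - f x - g x * (v - x)\<bar> \<le> \<epsilon> * \<bar>v - x\<bar>" by (rule \<delta>f[OF xE uab(2) dv])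
        have "\<bar>f v - f u - (v - u) * g x\<bar> \<le> \<epsilon> * \<bar>u - x\<bar> + \<epsilon> * \<bar>v - x\<bar>"
          using 1 2 by (smt (verit, best) left_diff_distrib mult.commute)
        also have "\<dots> = \<epsilon> * (v - u)" using uv by (simp add: algebra_simps)
        finally show ?thesis using SI False by (simp add: g0_def mult.commute)
      qed
    qed
    define pN where "pN = {xK \<in> p. fst xK \<in> N}"
    have Npart: "(\<Sum>(x,K)\<in>pN. \<bar>f (Sup K) - f (Inf K)\<bar>) < e/3"
    proof -
      have pNp: "pN \<subseteq> p" unfolding pN_def by blast
      define \<K> where "\<K> = {K \<in> snd ` pN. Inf K < Sup K}"
      have fin: "finite (snd ` pN)" using finp pNp finite_subset by blast
      have KsN: "\<K> \<subseteq> snd ` pN" unfolding \<K>_def by blast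
      have "(\<Sum>(x,K)\<in>pN. \<bar>f (Sup K) - f (Inf K)\<bar>) = (\<Sum>K\<in>snd ` pN. \<bar>f (Sup K) - f (Inf K)\<bar>)"
        by (rule reindex_tagged[OF p pNp])
      also have "\<dots> = (\<Sum>K\<in>\<K>. \<bar>f (Sup K) - f (Inf K)\<bar>)"
      proof (rule sum.mono_neutral_right[OF fin KsN], rule ballI)
        fix K assume "K \<in> snd ` pN - \<K>"
        then obtain x where xK: "(x,K) \<in> p" and nlt: "\<not> Inf K < Sup K" unfolding \<K>_def pN_def by force
        obtain u v where K: "K = {u..v}" "u \<le> x" "x \<le> v" "Sup K = v" "Inf K = u"
          using tagged_K[OF p xK] by metis
        then have "u = v" using nlt by simp
        then show "\<bar>f (Sup K) - f (Inf K)\<bar> = 0" using K by simp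
      qed
      also have "\<dots> < e/3"
      proof (rule dK[rule_format])
        show "finite \<K>" using fin KsN finite_subset by blast
        show "\<exists>u v. K = {u..v} \<and> u < v \<and> K \<subseteq> {a..b}" if K\<K>: "K \<in> \<K>" for K
        proof -
          obtain x where xK: "(x,K) \<in> p" and lt: "Inf K < Sup K" using K\<K> unfolding \<K>_def pN_def by force
          obtain u v where K: "K = {u..v}" "K \<subseteq> {a..b}" "Sup K = v" "Inf K = u"
            using tagged_K[OF p xK] by metis
          then show "\<exists>u v. K = {u..v} \<and> u < v \<and> K \<subseteq> {a..b}" using lt by auto
        qed
        show "interior K \<inter> interior L = {}" if "K \<in> \<K>" "L \<in> \<K>" "K \<noteq> L" for K L
        proof -
          from that obtain x y where "(x,K) \<in> p" "(y,L) \<in> p" unfolding \<K>_def pN_def by force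
          then show "interior K \<inter> interior L = {}"
            using tagged_division_ofD(5)[OF p] \<open>K \<noteq> L\<close> by blast
        qed
        have div: "\<K> division_of \<Union>\<K>"
        proof (rule division_of_subset)
          show "snd ` p division_of \<Union>(snd ` p)"
            using division_of_tagged_division[OF p] division_ofD(6) by metis
          show "\<K> \<subseteq> snd ` p" using KsN pNp by blast
        qed
        have "(\<Sum>K\<in>\<K>. Sup K - Inf K) = (\<Sum>K\<in>\<K>. measure lebesgue K)"
        proof (rule sum.cong[OF refl])
          fix K assume "K \<in> \<K>"
          then obtain x where xK: "(x,K) \<in> p" unfolding \<K>_def pN_def by force
          obtain u v where K: "K = {u..v}" "Sup K = v" "Inf K = u" "measure lborel K = v - u"
            using tagged_K[OF p xK] by metis
          then show "Sup K - Inf K = measure lebesgue K" by simp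
        qed
        also have "\<dots> = measure lebesgue (\<Union>\<K>)" by (rule content_division[OF div])
        also have "\<dots> < d"
        proof (rule Umeas)
          show "\<Union>\<K> \<in> lmeasurable" by (rule lmeasurable_division[OF div])
          show "\<Union>\<K> \<subseteq> U"
          proof
            fix z assume "z \<in> \<Union>\<K>"
            then obtain K where "K \<in> \<K>" "z \<in> K" by blast
            then obtain x where xK: "(x,K) \<in> p" and xN: "x \<in> N" unfolding \<K>_def pN_def by force
            have "K \<subseteq> ball x (r x)" using fineD[OF pf2 xK] xN by simp
            then show "z \<in> U" using rU[OF xN] \<open>z \<in> K\<close> by blast
          qed
        qed
        finally show "(\<Sum>K\<in>\<K>. Sup K - Inf K) < d" .
      qed
      finally show ?thesis .
    qed
    have "(\<Sum>(x,K)\<in>p. f (Sup K) - f (Inf K) - measure lborel K * g0 x) = (\<Sum>(x,K)\<in>p. f (Sup K) - f (Inf K)) - (\<Sum>(x,K)\<in>p. measure lborel K * g0 x)"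
      by (simp add: split_def sum_subtractf)
    then have "\<bar>(f b - f a) - (\<Sum>(x,K)\<in>p. measure lborel K * g0 x)\<bar> = \<bar>\<Sum>(x,K)\<in>p. f (Sup K) - f (Inf K) - measure lborel K * g0 x\<bar>"
      using fba by simp
    also have "\<dots> \<le> (\<Sum>(x,K)\<in>p. \<bar>f (Sup K) - f (Inf K) - measure lborel K * g0 x\<bar>)"
      using sum_abs[of "\<lambda>(x,K). f (Sup K) - f (Inf K) - measure lborel K * g0 x" p] by (simp add: split_def)
    also have "\<dots> \<le> (\<Sum>(x,K)\<in>p. \<epsilon> * measure lborel K + (if x \<in> N then \<bar>f (Sup K) - f (Inf K)\<bar> else 0))"
      by (rule sum_mono) (use pw in auto)
    also have "\<dots> = \<epsilon> * (b - a) + (\<Sum>(x,K)\<in>pN. \<bar>f (Sup K) - f (Inf K)\<bar>)"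
    proof -
      have "(\<Sum>(x,K)\<in>p. \<epsilon> * measure lborel K + (if x \<in> N then \<bar>f (Sup K) - f (Inf K)\<bar> else 0))
          = \<epsilon> * (\<Sum>(x,K)\<in>p. measure lborel K) + (\<Sum>(x,K)\<in>p. if x \<in> N then \<bar>f (Sup K) - f (Inf K)\<bar> else 0)"
        by (simp add: split_def sum.distrib sum_distrib_left)
      moreover have "(\<Sum>(x,K)\<in>p. if x \<in> N then \<bar>f (Sup K) - f (Inf K)\<bar> else 0) = (\<Sum>(x,K)\<in>pN. \<bar>f (Sup K) - f (Inf K)\<bar>)"
        unfolding pN_def by (simp add: sum.inter_filter[OF finp] split_def)
      ultimately show ?thesis using cont by simp
    qed
    also have "\<dots> < e/3 + e/3"
    proof -
      have "\<epsilon> * (b - a) = e/3" using \<open>a < b\<close> by (simp add: \<epsilon>_def field_simps)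
      then show ?thesis using Npart by linarith
    qed
    finally have A: "\<bar>(f b - f a) - (\<Sum>(x,K)\<in>p. measure lborel K * g0 x)\<bar> < e/3 + e/3" .
    have B: "\<bar>(\<Sum>(x,K)\<in>p. measure lborel K * g0 x) - integral {a..b} g\<bar> < e/3"
    proof -
      have "norm (sum (\<lambda>(x,k). measure lborel k *\<^sub>R g0 x) p - integral {a..b} g) < e/3"
        using g1f p pf1 by blast
      then show ?thesis by (simp add: split_def)
    qed
    show ?thesis using A B by linarith
  qed
  have "f b - f a = integral {a..b} g"
  proof (rule ccontr)
    assume "f b - f a \<noteq> integral {a..b} g"
    then have "\<bar>f b - f a - integral {a..b} g\<bar> > 0" by simp
    from key[OF this] show False by simp
  qed
  then show ?thesis using int by (simp add: has_integral_integral)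
qed



lemma ac_cont:
  assumes ac: "abs_continuous_on {a..b} f"
  shows "continuous_on {a..b} f"
  unfolding continuous_on_iff
proof (intro ballI allI impI)
  fix x e :: real assume x: "x \<in> {a..b}" and e: "e > 0"
  obtain d where d: "d > 0" and D: "\<forall>(n::nat) u v.
        (\<forall>k<n. u k < v k \<and> {u k..v k} \<subseteq> {a..b}) \<and>
        (\<forall>k<n. \<forall>j<n. k \<noteq> j \<longrightarrow> {u k<..<v k} \<inter> {u j<..<v j} = {}) \<and>
        (\<Sum>k<n. v k - u k) < d
        \<longrightarrow> (\<Sum>k<n. \<bar>f (v k) - f (u k)\<bar>) < e"
    using ac e unfolding abs_continuous_on_def by blast
  show "\<exists>d>0. \<forall>x'\<in>{a..b}. dist x' x < d \<longrightarrow> dist (f x') (f x) < e"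
  proof (intro exI[of _ d] conjI ballI impI d)
    fix y assume y: "y \<in> {a..b}" and dy: "dist y x < d"
    show "dist (f y) (f x) < e"
    proof (cases "y = x")
      case True then show ?thesis using e by simp
    next
      case False
      define u where "u = (\<lambda>k::nat. min x y)"
      define v where "v = (\<lambda>k::nat. max x y)"
      have "(\<Sum>k<1. \<bar>f (v k) - f (u k)\<bar>) < e"
      proof (rule D[rule_format], intro conjI allI impI)
        fix k assume "k < (1::nat)"
        show "u k < v k" using False by (auto simp: u_def v_def)
        show "{u k..v k} \<subseteq> {a..b}" using x y by (auto simp: u_def v_def)
      next
        fix k j assume "k < (1::nat)" "j < (1::nat)" "k \<noteq> j" then show "{u k<..<v k} \<inter> {u j<..<v j} = {}" by simp
      next
        show "(\<Sum>k<1. v k - u k) < d" using dy by (auto simp: u_def v_def dist_real_def)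
      qed
      then show ?thesis by (auto simp: u_def v_def dist_real_def abs_minus_commute min_def max_def split: if_splits)
    qed
  qed
qed

lemma ac_mult:
  fixes f :: "real \<Rightarrow> real"
  assumes ac: "abs_continuous_on {a..b} f"
  shows "abs_continuous_on {a..b} (\<lambda>x. (x - m) * f x)"
proof -
  have "compact (f ` {a..b})" by (rule compact_continuous_image[OF ac_cont[OF ac] compact_Icc])
  then obtain B where B: "B > 0" "\<And>x. x \<in> {a..b} \<Longrightarrow> \<bar>f x\<bar> \<le> B"
    using compact_imp_bounded bounded_pos by (metis image_eqI real_norm_def)
  define C where "C = \<bar>a - m\<bar> + \<bar>b - m\<bar> + 1"
  have C: "C > 0" "\<And>x. x \<in> {a..b} \<Longrightarrow> \<bar>x - m\<bar> \<le> C" unfolding C_def by auto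
  show ?thesis
    unfolding abs_continuous_on_def
  proof (intro allI impI)
    fix e :: real assume e: "e > 0"
    then have "e / (2 * C) > 0" using C by simp
    then obtain d where d: "d > 0" and D: "\<forall>(n::nat) u v.
        (\<forall>k<n. u k < v k \<and> {u k..v k} \<subseteq> {a..b}) \<and>
        (\<forall>k<n. \<forall>j<n. k \<noteq> j \<longrightarrow> {u k<..<v k} \<inter> {u j<..<v j} = {}) \<and>
        (\<Sum>k<n. v k - u k) < d
        \<longrightarrow> (\<Sum>k<n. \<bar>f (v k) - f (u k)\<bar>) < e / (2 * C)"
      using ac unfolding abs_continuous_on_def by blast
    define d' where "d' = min d (e / (2 * B))"
    have d': "d' > 0" using d e B by (simp add: d'_def)
    show "\<exists>d>0. \<forall>(n::nat) u v.
        (\<forall>k<n. u k < v k \<and> {u k..v k} \<subseteq> {a..b}) \<and>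
        (\<forall>k<n. \<forall>j<n. k \<noteq> j \<longrightarrow> {u k<..<v k} \<inter> {u j<..<v j} = {}) \<and>
        (\<Sum>k<n. v k - u k) < d
        \<longrightarrow> (\<Sum>k<n. \<bar>(v k - m) * f (v k) - (u k - m) * f (u k)\<bar>) < e"
    proof (intro exI[of _ d'] conjI allI impI d')
      fix n :: nat and u v :: "nat \<Rightarrow> real"
      assume a: "(\<forall>k<n. u k < v k \<and> {u k..v k} \<subseteq> {a..b}) \<and>
        (\<forall>k<n. \<forall>j<n. k \<noteq> j \<longrightarrow> {u k<..<v k} \<inter> {u j<..<v j} = {}) \<and>
        (\<Sum>k<n. v k - u k) < d'"
      then have s1: "(\<Sum>k<n. \<bar>f (v k) - f (u k)\<bar>) < e / (2 * C)" using D d'_def by auto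
      have s2: "(\<Sum>k<n. v k - u k) < e / (2 * B)" using a d'_def by auto
      have pw: "\<bar>(v k - m) * f (v k) - (u k - m) * f (u k)\<bar> \<le> C * \<bar>f (v k) - f (u k)\<bar> + B * (v k - u k)"
        if k: "k < n" for k
      proof -
        have uv: "u k \<in> {a..b}" "v k \<in> {a..b}" "u k < v k" using a k by auto
        have "(v k - m) * f (v k) - (u k - m) * f (u k) = (v k - m) * (f (v k) - f (u k)) + (v k - u k) * f (u k)"
          by (simp add: algebra_simps)
        also have "\<bar>\<dots>\<bar> \<le> \<bar>v k - m\<bar> * \<bar>f (v k) - f (u k)\<bar> + (v k - u k) * \<bar>f (u k)\<bar>"
          using uv by (simp add: abs_mult abs_triangle_ineq[THEN order_trans])
        also have "\<dots> \<le> C * \<bar>f (v k) - f (u k)\<bar> + B * (v k - u k)"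
          using uv C(2)[of "v k"] B(2)[of "u k"]
          by (intro add_mono mult_right_mono) (auto simp: mult.commute intro: mult_left_mono)
        finally show ?thesis .
      qed
      have "(\<Sum>k<n. \<bar>(v k - m) * f (v k) - (u k - m) * f (u k)\<bar>) \<le> (\<Sum>k<n. C * \<bar>f (v k) - f (u k)\<bar> + B * (v k - u k))"
        by (rule sum_mono) (use pw in auto)
      also have "\<dots> = C * (\<Sum>k<n. \<bar>f (v k) - f (u k)\<bar>) + B * (\<Sum>k<n. v k - u k)"
        by (simp add: sum.distrib sum_distrib_left)
      also have "\<dots> < C * (e / (2 * C)) + B * (e / (2 * B))"
        using s1 s2 C B by (intro add_strict_mono mult_strict_left_mono) auto
      also have "\<dots> = e" using C B by simp
      finally show "(\<Sum>k<n. \<bar>(v k - m) * f (v k) - (u k - m) * f (u k)\<bar>) < e" .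
    qed
  qed
qed



lemma interval_sub:
  fixes I :: "real set"
  assumes "is_interval I" "a \<in> interior I" "b \<in> interior I"
  shows "{a..b} \<subseteq> interior I"
proof -
  have "convex (interior I)" using assms(1) by (simp add: is_interval_convex convex_interior)
  then have ii: "is_interval (interior I)" using is_interval_convex_1 by blast
  show ?thesis
  proof
    fix x assume x: "x \<in> {a..b}"
    show "x \<in> interior I"
      by (rule mem_is_interval_1_I[OF ii assms(2) assms(3)]) (use x in auto)
  qed
qed

lemma null_negl: "N \<in> null_sets lborel \<Longrightarrow> negligible (N::real set)"
  by (simp add: negligible_iff_null_sets null_sets_completionI)

lemma sqmeas: assumes "set_integrable lborel {a..b} (f'::real\<Rightarrow>real)"
  shows "(\<lambda>x. indicator {a..b} x *\<^sub>R (f' x)\<^sup>2) \<in> borel_measurable lborel"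
proof -
  have "(\<lambda>x. indicator {a..b} x *\<^sub>R f' x) \<in> borel_measurable lborel"
    using assms unfolding set_integrable_def by blast
  then have "(\<lambda>x. (indicator {a..b} x *\<^sub>R f' x)\<^sup>2) \<in> borel_measurable lborel" by measurable
  moreover have "(\<lambda>x. (indicator {a..b} x *\<^sub>R f' x)\<^sup>2) = (\<lambda>x. indicator {a..b} x *\<^sub>R (f' x)\<^sup>2)"
    by (auto simp: indicator_def)
  ultimately show ?thesis by simp
qed

lemma lb_abs: assumes "set_integrable lborel {a..b} (f'::real\<Rightarrow>real)" shows "f' absolutely_integrable_on {a..b}"
  using assms unfolding set_integrable_def
  by (simp add: integrable_completion borel_measurable_integrable)

lemma sq_finite:
  fixes f' :: "real \<Rightarrow> real"
  assumes f': "set_integrable lborel {a..b} f'"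
    and fin: "(\<integral>\<^sup>+ x\<in>{a..b}. ennreal ((f' x)\<^sup>2) \<partial>lborel) \<noteq> \<infinity>"
  shows "set_integrable lborel {a..b} (\<lambda>x. (f' x)\<^sup>2)"
    and "(\<integral>\<^sup>+ x\<in>{a..b}. ennreal ((f' x)\<^sup>2) \<partial>lborel) = ennreal (LBINT x:{a..b}. (f' x)\<^sup>2)"
proof -
  have eq: "(\<integral>\<^sup>+ x. ennreal (norm (indicator {a..b} x *\<^sub>R (f' x)\<^sup>2)) \<partial>lborel) = (\<integral>\<^sup>+ x\<in>{a..b}. ennreal ((f' x)\<^sup>2) \<partial>lborel)"
    by (rule nn_integral_cong) (auto simp: indicator_def)
  show si: "set_integrable lborel {a..b} (\<lambda>x. (f' x)\<^sup>2)"
    unfolding set_integrable_def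
    by (rule integrableI_bounded[OF sqmeas[OF f']]) (use eq fin in \<open>simp add: top.not_eq_extremum\<close>)
  have "(\<integral>\<^sup>+ x. ennreal (indicator {a..b} x *\<^sub>R (f' x)\<^sup>2) \<partial>lborel) = ennreal (integral\<^sup>L lborel (\<lambda>x. indicator {a..b} x *\<^sub>R (f' x)\<^sup>2))"
    by (rule nn_integral_eq_integral) (use si in \<open>auto simp: set_integrable_def\<close>)
  moreover have "(\<integral>\<^sup>+ x. ennreal (indicator {a..b} x *\<^sub>R (f' x)\<^sup>2) \<partial>lborel) = (\<integral>\<^sup>+ x\<in>{a..b}. ennreal ((f' x)\<^sup>2) \<partial>lborel)"
    by (rule nn_integral_cong) (auto simp: indicator_def)
  ultimately show "(\<integral>\<^sup>+ x\<in>{a..b}. ennreal ((f' x)\<^sup>2) \<partial>lborel) = ennreal (LBINT x:{a..b}. (f' x)\<^sup>2)"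
    by (simp add: set_lebesgue_integral_def)
qed

lemma int_sq_centered:
  fixes a b :: real assumes "a \<le> b"
  shows "integral {a..b} (\<lambda>x. (x - (a+b)/2)\<^sup>2) = (b - a)^3 / 12"
proof -
  have "((\<lambda>x. (x - (a+b)/2)\<^sup>2) has_integral ((\<lambda>x. (x - (a+b)/2)^3 / 3) b - (\<lambda>x. (x - (a+b)/2)^3 / 3) a)) {a..b}"
  proof (rule fundamental_theorem_of_calculus[OF assms])
    fix x assume "x \<in> {a..b}"
    show "((\<lambda>x. (x - (a+b)/2)^3 / 3) has_vector_derivative (x - (a+b)/2)\<^sup>2) (at x within {a..b})"
      unfolding has_real_derivative_iff_has_vector_derivative[symmetric]
      by (auto intro!: derivative_eq_intros simp: power2_eq_square)
  qed
  then have "integral {a..b} (\<lambda>x. (x - (a+b)/2)\<^sup>2) = (b - (a+b)/2)^3 / 3 - (a - (a+b)/2)^3 / 3"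
    by (simp add: integral_unique)
  also have "\<dots> = (b - a)^3 / 12" by (simp add: field_simps power3_eq_cube)
  finally show ?thesis .
qed



lemma part1:
  fixes I :: "real set" and f f' :: "real \<Rightarrow> real" and a b :: real
  assumes "is_interval I"
    and "abs_continuous_on (interior I) f"
    and "a \<in> interior I" and "b \<in> interior I" and "a < b"
    and "AE x in lborel. x \<in> {a..b} \<longrightarrow> (f has_real_derivative f' x) (at x)"
    and "set_integrable lborel {a..b} f'"
  shows "ennreal ((2 / (b - a) * Trap a b f - (SUP x\<in>{a..b}. f x)) * (SUP x\<in>{a..b}. f x))
           \<le> ennreal ((b - a) / 12) * (\<integral>\<^sup>+ x\<in>{a..b}. ennreal ((f' x)\<^sup>2) \<partial>lborel)"
proof -
  note ab = \<open>a < b\<close>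
  have sub: "{a..b} \<subseteq> interior I" by (rule interval_sub[OF assms(1,3,4)])
  have acab: "abs_continuous_on {a..b} f" by (rule ac_subset[OF assms(2) sub])
  have contf: "continuous_on {a..b} f" by (rule ac_cont[OF acab])
  define m where "m = (a + b) / 2"
  have "\<exists>N\<in>null_sets lborel. {x \<in> space lborel. \<not> (x \<in> {a..b} \<longrightarrow> (f has_real_derivative f' x) (at x))} \<subseteq> N"
    using assms(6) by (simp only: eventually_ae_filter)
  then obtain N where Nnull: "N \<in> null_sets lborel"
    and N: "{x \<in> space lborel. \<not> (x \<in> {a..b} \<longrightarrow> (f has_real_derivative f' x) (at x))} \<subseteq> N"
    by (rule bexE)
  have negN: "negligible N" by (rule null_negl[OF Nnull])
  have derH: "((\<lambda>x. (x - m) * f x) has_real_derivative (f x + (x - m) * f' x)) (at x within {a..b})"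
    if x: "x \<in> {a..b} - N" for x
  proof -
    have "(f has_real_derivative f' x) (at x)" using N x by auto
    then have "((\<lambda>x. (x - m) * f x) has_real_derivative (1 * f x + (x - m) * f' x)) (at x)"
      by (auto intro!: derivative_eq_intros)
    then show ?thesis by (simp add: has_field_derivative_at_within)
  qed
  have f'abs: "f' absolutely_integrable_on {a..b}" by (rule lb_abs[OF assms(7)])
  have prodabs: "(\<lambda>x. (x - m) * f' x) absolutely_integrable_on {a..b}"
  proof (rule absolutely_integrable_bounded_measurable_product_real[OF _ _ _ f'abs])
    show "(\<lambda>x. x - m) \<in> borel_measurable (lebesgue_on {a..b})"
      by (rule continuous_imp_measurable_on_sets_lebesgue) (auto intro!: continuous_intros)
    show "{a..b} \<in> sets lebesgue" by simp
    show "bounded ((\<lambda>x. x - m) ` {a..b})"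
      by (rule compact_imp_bounded, rule compact_continuous_image) (auto intro!: continuous_intros)
  qed
  have prodint: "(\<lambda>x. (x - m) * f' x) integrable_on {a..b}"
    using prodabs set_lebesgue_integral_eq_integral(1) by blast
  have fint: "f integrable_on {a..b}" by (rule integrable_continuous_real[OF contf])
  have FTC: "((\<lambda>x. f x + (x - m) * f' x) has_integral ((b - m) * f b - (a - m) * f a)) {a..b}"
    using ftc_ac[OF less_imp_le[OF ab] ac_mult[OF acab] negN derH Henstock_Kurzweil_Integration.integrable_add[OF fint prodint]]
    by simp
  define T where "T = integral {a..b} (\<lambda>x. (x - m) * f' x)"
  have "integral {a..b} f + T = (b - m) * f b - (a - m) * f a"
    using integral_unique[OF FTC] Henstock_Kurzweil_Integration.integral_add[OF fint prodint] by (simp add: T_def)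
  moreover have "(LBINT x:{a..b}. f x) = integral {a..b} f"
    by (rule set_borel_integral_eq_integral(2)[OF borel_integrable_atLeastAtMost'[OF contf]])
  ultimately have TT: "Trap a b f = T"
    unfolding Trap_def m_def by (simp add: field_simps)
  define M where "M = (SUP x\<in>{a..b}. f x)"
  define L where "L = b - a"
  have L: "L > 0" using ab by (simp add: L_def)
  show ?thesis
  proof (cases "(\<integral>\<^sup>+ x\<in>{a..b}. ennreal ((f' x)\<^sup>2) \<partial>lborel) = \<infinity>")
    case True
    have "ennreal ((b - a) / 12) \<noteq> 0" using ab by simp
    then show ?thesis using True by (simp add: ennreal_mult_top)
  next
    case False
    have si: "set_integrable lborel {a..b} (\<lambda>x. (f' x)\<^sup>2)" by (rule sq_finite(1)[OF assms(7) False])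
    have nn: "(\<integral>\<^sup>+ x\<in>{a..b}. ennreal ((f' x)\<^sup>2) \<partial>lborel) = ennreal (LBINT x:{a..b}. (f' x)\<^sup>2)"
      by (rule sq_finite(2)[OF assms(7) False])
    define B where "B = integral {a..b} (\<lambda>x. (f' x)\<^sup>2)"
    have sqint: "(\<lambda>x. (f' x)\<^sup>2) integrable_on {a..b}" by (rule set_borel_integral_eq_integral(1)[OF si])
    have LB: "(LBINT x:{a..b}. (f' x)\<^sup>2) = B" unfolding B_def by (rule set_borel_integral_eq_integral(2)[OF si])
    define A0 where "A0 = L^3 / 12"
    have A0: "integral {a..b} (\<lambda>x. (x - m)\<^sup>2) = A0" "A0 > 0"
      using int_sq_centered[of a b] ab L by (simp_all add: A0_def L_def m_def)
    have cint: "(\<lambda>x. (x - m)\<^sup>2) integrable_on {a..b}"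
      by (rule integrable_continuous_real) (auto intro!: continuous_intros)
    define c where "c = T / A0"
    have "integral {a..b} (\<lambda>x. 2 * c * ((x - m) * f' x)) \<le> integral {a..b} (\<lambda>x. c\<^sup>2 * (x - m)\<^sup>2 + (f' x)\<^sup>2)"
    proof (rule integral_le)
      show "(\<lambda>x. 2 * c * ((x - m) * f' x)) integrable_on {a..b}"
        by (rule integrable_on_mult_right[OF prodint])
      show "(\<lambda>x. c\<^sup>2 * (x - m)\<^sup>2 + (f' x)\<^sup>2) integrable_on {a..b}"
        by (rule Henstock_Kurzweil_Integration.integrable_add[OF integrable_on_mult_right[OF cint] sqint])
      fix x
      have "0 \<le> (c * (x - m) - f' x)\<^sup>2" by simp
      then show "2 * c * ((x - m) * f' x) \<le> c\<^sup>2 * (x - m)\<^sup>2 + (f' x)\<^sup>2"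
        by (simp add: power2_eq_square algebra_simps)
    qed
    moreover have "integral {a..b} (\<lambda>x. 2 * c * ((x - m) * f' x)) = 2 * c * T"
      by (simp add: T_def)
    moreover have "integral {a..b} (\<lambda>x. c\<^sup>2 * (x - m)\<^sup>2 + (f' x)\<^sup>2) = c\<^sup>2 * A0 + B"
      using Henstock_Kurzweil_Integration.integral_add[OF integrable_on_mult_right[OF cint] sqint] A0
      by (simp add: B_def)
    ultimately have "2 * c * T \<le> c\<^sup>2 * A0 + B" by linarith
    then have "2 * T\<^sup>2 / A0 \<le> T\<^sup>2 / A0 + B" using A0(2) by (simp add: c_def power2_eq_square field_simps)
    then have CS: "T\<^sup>2 \<le> A0 * B" using A0(2) by (simp add: field_simps)
    have real: "(2 / L * T - M) * M \<le> L / 12 * B"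
    proof -
      have "(2 / L * T - M) * M \<le> (T / L)\<^sup>2"
      proof -
        have "0 \<le> (T / L - M)\<^sup>2" by simp
        then show ?thesis by (simp add: power2_eq_square algebra_simps)
      qed
      also have "\<dots> = T\<^sup>2 / L\<^sup>2" by (simp add: power_divide)
      also have "\<dots> \<le> A0 * B / L\<^sup>2" using CS L by (simp add: divide_right_mono)
      also have "\<dots> = L / 12 * B" using L by (simp add: A0_def power2_eq_square power3_eq_cube field_simps)
      finally show ?thesis .
    qed
    have "ennreal ((2 / (b - a) * Trap a b f - M) * M) \<le> ennreal (L / 12 * B)"
      using real TT by (intro ennreal_leI) (simp add: L_def)
    also have "\<dots> = ennreal ((b - a) / 12) * ennreal B"
      using L unfolding L_def by (intro ennreal_mult') simp
    finally show ?thesis using nn LB by (simp add: M_def)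
  qed
qed



lemma lip_ac:
  fixes g :: "real \<Rightarrow> real"
  assumes K: "K > 0" and lip: "\<And>x y. x \<in> S \<Longrightarrow> y \<in> S \<Longrightarrow> \<bar>g y - g x\<bar> \<le> K * \<bar>y - x\<bar>"
  shows "abs_continuous_on S g"
  unfolding abs_continuous_on_def
proof (intro allI impI)
  fix e :: real assume e: "e > 0"
  show "\<exists>d>0. \<forall>(n::nat) u v.
        (\<forall>k<n. u k < v k \<and> {u k..v k} \<subseteq> S) \<and>
        (\<forall>k<n. \<forall>j<n. k \<noteq> j \<longrightarrow> {u k<..<v k} \<inter> {u j<..<v j} = {}) \<and>
        (\<Sum>k<n. v k - u k) < d
        \<longrightarrow> (\<Sum>k<n. \<bar>g (v k) - g (u k)\<bar>) < e"
  proof (intro exI[of _ "e / K"] conjI allI impI)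
    show "e / K > 0" using e K by simp
    fix n :: nat and u v :: "nat \<Rightarrow> real"
    assume a: "(\<forall>k<n. u k < v k \<and> {u k..v k} \<subseteq> S) \<and>
        (\<forall>k<n. \<forall>j<n. k \<noteq> j \<longrightarrow> {u k<..<v k} \<inter> {u j<..<v j} = {}) \<and>
        (\<Sum>k<n. v k - u k) < e / K"
    have "(\<Sum>k<n. \<bar>g (v k) - g (u k)\<bar>) \<le> (\<Sum>k<n. K * (v k - u k))"
    proof (rule sum_mono)
      fix k assume "k \<in> {..<n}"
      then have uv: "u k < v k" "{u k..v k} \<subseteq> S" using a by auto
      then have "u k \<in> {u k..v k}" "v k \<in> {u k..v k}" by auto
      with uv have "u k < v k" "u k \<in> S" "v k \<in> S" by blast+
      then show "\<bar>g (v k) - g (u k)\<bar> \<le> K * (v k - u k)" using lip[of "u k" "v k"] by simp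
    qed
    also have "\<dots> = K * (\<Sum>k<n. v k - u k)" by (simp add: sum_distrib_left)
    also have "\<dots> < K * (e / K)" using a K by (intro mult_strict_left_mono) auto
    also have "\<dots> = e" using K by simp
    finally show "(\<Sum>k<n. \<bar>g (v k) - g (u k)\<bar>) < e" .
  qed
qed

lemma lbint_ftc:
  fixes G g :: "real \<Rightarrow> real"
  assumes "a \<le> b" "\<And>x. (G has_real_derivative g x) (at x)" "continuous_on {a..b} g"
  shows "(LBINT x:{a..b}. g x) = G b - G a"
proof -
  have "(g has_integral (G b - G a)) {a..b}"
  proof (rule fundamental_theorem_of_calculus[OF assms(1)])
    fix x assume "x \<in> {a..b}"
    show "(G has_vector_derivative g x) (at x within {a..b})"
      unfolding has_real_derivative_iff_has_vector_derivative[symmetric]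
      using assms(2) by (rule has_field_derivative_at_within)
  qed
  then show ?thesis
    using set_borel_integral_eq_integral(2)[OF borel_integrable_atLeastAtMost'[OF assms(3)]]
    by (simp add: integral_unique)
qed

lemma part2:
  fixes a b :: real
  assumes ab: "a < b"
  shows "\<exists>(J::real set) (g::real \<Rightarrow> real) (g'::real \<Rightarrow> real).
           is_interval J \<and> abs_continuous_on (interior J) g \<and>
           a \<in> interior J \<and> b \<in> interior J \<and>
           (AE x in lborel. x \<in> {a..b} \<longrightarrow> (g has_real_derivative g' x) (at x)) \<and>
           set_integrable lborel {a..b} g' \<and>
           set_integrable lborel {a..b} (\<lambda>x. (g' x)\<^sup>2) \<and>
           (\<exists>x\<in>{a..b}. g x \<noteq> g a) \<and>
           (2 / (b - a) * Trap a b g - (SUP x\<in>{a..b}. g x)) * (SUP x\<in>{a..b}. g x)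
             = (b - a) / 12 * (LBINT x:{a..b}. (g' x)\<^sup>2)"
proof -
  define L where "L = b - a"
  have L: "L > 0" using ab by (simp add: L_def)
  define J where "J = {a - 1<..<b + 1}"
  define g where "g = (\<lambda>x::real. (x - a) * (x - b) + L\<^sup>2 / 6)"
  define g' where "g' = (\<lambda>x::real. 2 * x - a - b)"
  have intJ: "interior J = J" unfolding J_def by (simp add: interior_open)
  have isJ: "is_interval J" unfolding J_def by (auto simp: is_interval_1)
  have der: "(g has_real_derivative g' x) (at x)" for x
    unfolding g_def g'_def by (auto intro!: derivative_eq_intros simp: algebra_simps)
  have acJ: "abs_continuous_on J g"
  proof (rule lip_ac[of "2 * L + 3"])
    show "2 * L + 3 > 0" using L by simp
    fix x y assume x: "x \<in> J" and y: "y \<in> J"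
    have "g y - g x = (y - x) * (y + x - a - b)" unfolding g_def by (simp add: algebra_simps)
    then have "\<bar>g y - g x\<bar> = \<bar>y - x\<bar> * \<bar>y + x - a - b\<bar>" by (simp add: abs_mult)
    also have "\<dots> \<le> \<bar>y - x\<bar> * (2 * L + 3)"
      using x y ab unfolding J_def L_def by (intro mult_left_mono) (auto simp: abs_le_iff)
    finally show "\<bar>g y - g x\<bar> \<le> (2 * L + 3) * \<bar>y - x\<bar>" by (simp add: mult.commute)
  qed
  have cg': "continuous_on {a..b} g'" unfolding g'_def by (auto intro!: continuous_intros)
  have cg'2: "continuous_on {a..b} (\<lambda>x. (g' x)\<^sup>2)" unfolding g'_def by (auto intro!: continuous_intros)
  have cg: "continuous_on {a..b} g" unfolding g_def by (auto intro!: continuous_intros)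
  have Sup: "(SUP x\<in>{a..b}. g x) = L\<^sup>2 / 6"
  proof (rule cSup_eq_maximum)
    show "L\<^sup>2 / 6 \<in> g ` {a..b}" using ab by (auto simp: g_def intro!: image_eqI[of _ _ a])
    fix y assume "y \<in> g ` {a..b}"
    then obtain x where x: "x \<in> {a..b}" "y = g x" by auto
    have "(x - a) * (x - b) \<le> 0" using x by (intro mult_nonneg_nonpos) auto
    then show "y \<le> L\<^sup>2 / 6" using x by (simp add: g_def)
  qed
  have Ig: "(LBINT x:{a..b}. g x) = 0"
  proof -
    have "(LBINT x:{a..b}. g x) = (\<lambda>x. x^3/3 - (a+b) * x\<^sup>2 / 2 + a * b * x + L\<^sup>2 / 6 * x) b - (\<lambda>x. x^3/3 - (a+b) * x\<^sup>2 / 2 + a * b * x + L\<^sup>2 / 6 * x) a"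
    proof (rule lbint_ftc[OF less_imp_le[OF ab] _ cg])
      fix x show "((\<lambda>x. x^3/3 - (a+b) * x\<^sup>2 / 2 + a * b * x + L\<^sup>2 / 6 * x) has_real_derivative g x) (at x)"
        unfolding g_def by (auto intro!: derivative_eq_intros simp: algebra_simps power2_eq_square)
    qed
    also have "\<dots> = 0" unfolding L_def by (simp add: field_simps power2_eq_square power3_eq_cube)
    finally show ?thesis .
  qed
  have Ig': "(LBINT x:{a..b}. (g' x)\<^sup>2) = L^3 / 3"
  proof -
    have "(LBINT x:{a..b}. (g' x)\<^sup>2) = (\<lambda>x. (2 * x - a - b)^3 / 6) b - (\<lambda>x. (2 * x - a - b)^3 / 6) a"
    proof (rule lbint_ftc[OF less_imp_le[OF ab] _ cg'2])
      fix x show "((\<lambda>x. (2 * x - a - b)^3 / 6) has_real_derivative (g' x)\<^sup>2) (at x)"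
        unfolding g'_def by (auto intro!: derivative_eq_intros simp: field_simps power2_eq_square)
    qed
    also have "\<dots> = L^3 / 3" unfolding L_def by (simp add: field_simps power2_eq_square power3_eq_cube)
    finally show ?thesis .
  qed
  have Tr: "Trap a b g = L^3 / 6"
    unfolding Trap_def Ig by (simp add: g_def L_def power2_eq_square power3_eq_cube field_simps)
  show ?thesis
  proof (rule exI[of _ J], rule exI[of _ g], rule exI[of _ g'], intro conjI)
    show "is_interval J" by (rule isJ)
    show "abs_continuous_on (interior J) g" using acJ intJ by simp
    show "a \<in> interior J" "b \<in> interior J" using ab unfolding intJ J_def by auto
    show "AE x in lborel. x \<in> {a..b} \<longrightarrow> (g has_real_derivative g' x) (at x)"
      by (rule AE_I2) (use der in blast)
    show "set_integrable lborel {a..b} g'" by (rule borel_integrable_atLeastAtMost'[OF cg'])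
    show "set_integrable lborel {a..b} (\<lambda>x. (g' x)\<^sup>2)" by (rule borel_integrable_atLeastAtMost'[OF cg'2])
    show "\<exists>x\<in>{a..b}. g x \<noteq> g a"
    proof (intro bexI[of _ "(a + b) / 2"])
      show "(a + b) / 2 \<in> {a..b}" using ab by simp
      show "g ((a + b) / 2) \<noteq> g a"
      proof -
        have "g ((a + b) / 2) - g a = - (L\<^sup>2 / 4)" unfolding g_def L_def by (simp add: field_simps power2_eq_square)
        moreover have "L\<^sup>2 > 0" using L by simp
        ultimately show ?thesis by auto
      qed
    qed
    show "(2 / (b - a) * Trap a b g - (SUP x\<in>{a..b}. g x)) * (SUP x\<in>{a..b}. g x)
             = (b - a) / 12 * (LBINT x:{a..b}. (g' x)\<^sup>2)"
      unfolding Sup Tr Ig' using L by (simp add: L_def[symmetric] power2_eq_square power3_eq_cube field_simps)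
  qed
qed


theorem theorem6:
  fixes I :: "real set" and f f' :: "real \<Rightarrow> real" and a b :: real
  assumes "is_interval I"
    and "abs_continuous_on (interior I) f"
    and "a \<in> interior I" and "b \<in> interior I" and "a < b"
    and "AE x in lborel. x \<in> {a..b} \<longrightarrow> (f has_real_derivative f' x) (at x)"
    and "set_integrable lborel {a..b} f'"
  shows "ennreal ((2 / (b - a) * Trap a b f - (SUP x\<in>{a..b}. f x)) * (SUP x\<in>{a..b}. f x))
           \<le> ennreal ((b - a) / 12) * (\<integral>\<^sup>+ x\<in>{a..b}. ennreal ((f' x)\<^sup>2) \<partial>lborel)
         \<and> (\<exists>(J::real set) (g::real \<Rightarrow> real) (g'::real \<Rightarrow> real).
           is_interval J \<and> abs_continuous_on (interior J) g \<and>
           a \<in> interior J \<and> b \<in> interior J \<and>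
           (AE x in lborel. x \<in> {a..b} \<longrightarrow> (g has_real_derivative g' x) (at x)) \<and>
           set_integrable lborel {a..b} g' \<and>
           set_integrable lborel {a..b} (\<lambda>x. (g' x)\<^sup>2) \<and>
           (\<exists>x\<in>{a..b}. g x \<noteq> g a) \<and>
           (2 / (b - a) * Trap a b g - (SUP x\<in>{a..b}. g x)) * (SUP x\<in>{a..b}. g x)
             = (b - a) / 12 * (LBINT x:{a..b}. (g' x)\<^sup>2))"
  proof
  show "ennreal ((2 / (b - a) * Trap a b f - (SUP x\<in>{a..b}. f x)) * (SUP x\<in>{a..b}. f x))
           \<le> ennreal ((b - a) / 12) * (\<integral>\<^sup>+ x\<in>{a..b}. ennreal ((f' x)\<^sup>2) \<partial>lborel)"
    by (rule part1[OF assms])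
  show "\<exists>(J::real set) (g::real \<Rightarrow> real) (g'::real \<Rightarrow> real).
           is_interval J \<and> abs_continuous_on (interior J) g \<and>
           a \<in> interior J \<and> b \<in> interior J \<and>
           (AE x in lborel. x \<in> {a..b} \<longrightarrow> (g has_real_derivative g' x) (at x)) \<and>
           set_integrable lborel {a..b} g' \<and>
           set_integrable lborel {a..b} (\<lambda>x. (g' x)\<^sup>2) \<and>
           (\<exists>x\<in>{a..b}. g x \<noteq> g a) \<and>
           (2 / (b - a) * Trap a b g - (SUP x\<in>{a..b}. g x)) * (SUP x\<in>{a..b}. g x)
             = (b - a) / 12 * (LBINT x:{a..b}. (g' x)\<^sup>2)"
    by (rule part2[OF assms(5)])
qed

end
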